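(* Let $f=p/q$ be a rational function with $p,q$ of degree $l$, positive on the standard simplex $\Delta$, with $b_\alpha(q,j,\Delta)>0$ for all $|\alpha|=j$, $j\ge l$. Then there exists $k\ge l$ such that $\min_{|\alpha|=k} b_\alpha(f,k,\Delta)>0$.
   Context: $\Delta$ is the standard simplex in $\mathbb{R}^n$ with barycentric coordinates $\lambda=(1-\sum x_i,x_1,\dots,x_n)$; $B^{(k)}_\alpha=\frac{k!}{\alpha_0!\cdots\alpha_n!}\lambda^\alpha$ ($\alpha\in\mathbb{N}^{n+1}$, $|\alpha|=k$) are the Bernstein polynomials of degree $k$; $b_\alpha(p,k,\Delta)$ denote the coefficients of $p$ in this basis and $b_\alpha(f,k,\Delta)=b_\alpha(p,k,\Delta)/b_\alpha(q,k,\Delta)$ are the rational Bernstein coefficients. *)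

theory Defs
  imports Complex_Main
begin

text \<open>Points of R^n are encoded as functions x :: nat => real, the coordinates
  being x 1, ..., x n (other values are ignored).  Multi-indices alpha for the
  Bernstein basis are functions nat => nat supported on {0..n}.\<close>

definition monomial_exps :: "nat \<Rightarrow> nat \<Rightarrow> (nat \<Rightarrow> nat) set" where
  "monomial_exps n l = {\<beta>. (\<forall>i. i \<notin> {1..n} \<longrightarrow> \<beta> i = 0) \<and> (\<Sum>i=1..n. \<beta> i) \<le> l}"

definition poly_deg_le :: "nat \<Rightarrow> nat \<Rightarrow> ((nat \<Rightarrow> real) \<Rightarrow> real) \<Rightarrow> bool" where
  "poly_deg_le n l p \<longleftrightarrow>
     (\<exists>c :: (nat \<Rightarrow> nat) \<Rightarrow> real. \<forall>x. p x = (\<Sum>\<beta>\<in>monomial_exps n l. c \<beta> * (\<Prod>i=1..n. x i ^ \<beta> i)))"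

definition std_simplex :: "nat \<Rightarrow> (nat \<Rightarrow> real) set" where
  "std_simplex n = {x. (\<forall>i\<in>{1..n}. 0 \<le> x i) \<and> (\<Sum>i=1..n. x i) \<le> 1}"

definition bary :: "nat \<Rightarrow> (nat \<Rightarrow> real) \<Rightarrow> nat \<Rightarrow> real" where
  "bary n x i = (if i = 0 then 1 - (\<Sum>j=1..n. x j) else x i)"

definition multi_idx :: "nat \<Rightarrow> nat \<Rightarrow> (nat \<Rightarrow> nat) set" where
  "multi_idx n k = {\<alpha>. (\<forall>i>n. \<alpha> i = 0) \<and> (\<Sum>i=0..n. \<alpha> i) = k}"

definition bernstein :: "nat \<Rightarrow> nat \<Rightarrow> (nat \<Rightarrow> nat) \<Rightarrow> (nat \<Rightarrow> real) \<Rightarrow> real" where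
  "bernstein n k \<alpha> x =
     fact k / (\<Prod>i=0..n. fact (\<alpha> i)) * (\<Prod>i=0..n. bary n x i ^ \<alpha> i)"

definition bernstein_coeffs :: "nat \<Rightarrow> nat \<Rightarrow> ((nat \<Rightarrow> real) \<Rightarrow> real) \<Rightarrow> (nat \<Rightarrow> nat) \<Rightarrow> real" where
  "bernstein_coeffs n k p =
     (THE b. (\<forall>\<alpha>. \<alpha> \<notin> multi_idx n k \<longrightarrow> b \<alpha> = 0) \<and>
             (\<forall>x. p x = (\<Sum>\<alpha>\<in>multi_idx n k. b \<alpha> * bernstein n k \<alpha> x)))"

definition rat_bernstein_coeffs ::
  "nat \<Rightarrow> nat \<Rightarrow> ((nat \<Rightarrow> real) \<Rightarrow> real) \<Rightarrow> ((nat \<Rightarrow> real) \<Rightarrow> real) \<Rightarrow> (nat \<Rightarrow> nat) \<Rightarrow> real" where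
  "rat_bernstein_coeffs n k p q \<alpha> = bernstein_coeffs n k p \<alpha> / bernstein_coeffs n k q \<alpha>"

end

theory Submission
  imports Defs "HOL-Analysis.Analysis"
begin


lemma finite_multi_idx: "finite (multi_idx n k)"
proof -
  have "multi_idx n k \<subseteq> (\<lambda>f i. if i \<le> n then f i else 0) ` (PiE {0..n} (\<lambda>_. {0..k}))"
  proof
    fix \<alpha> assume a: "\<alpha> \<in> multi_idx n k"
    hence s: "(\<Sum>i=0..n. \<alpha> i) = k" and z: "\<forall>i>n. \<alpha> i = 0" by (auto simp: multi_idx_def)
    have le: "\<alpha> i \<le> k" if "i \<le> n" for i
      using member_le_sum[of i "{0..n}" \<alpha>] that s by auto
    have "\<alpha> = (\<lambda>i. if i \<le> n then restrict \<alpha> {0..n} i else 0)"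
      using z by (auto simp: fun_eq_iff)
    moreover have "restrict \<alpha> {0..n} \<in> PiE {0..n} (\<lambda>_. {0..k})" using le by auto
    ultimately show "\<alpha> \<in> (\<lambda>f i. if i \<le> n then f i else 0) ` (PiE {0..n} (\<lambda>_. {0..k}))"
      by blast
  qed
  thus ?thesis by (rule finite_subset) (auto intro!: finite_PiE)
qed

lemma bary_sum: "(\<Sum>i=0..n. bary n x i) = 1"
proof -
  have "{0..n} = insert 0 {1..n}" by auto
  hence "(\<Sum>i=0..n. bary n x i) = bary n x 0 + (\<Sum>i=1..n. bary n x i)" by simp
  also have "(\<Sum>i=1..n. bary n x i) = (\<Sum>i=1..n. x i)" by (rule sum.cong) (auto simp: bary_def)
  finally show ?thesis by (simp add: bary_def)
qed

lemma prod_upd: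
  assumes "i \<in> A" "finite A"
  shows "(\<Prod>j\<in>A. g j ((\<alpha>(i:=v)) j)) = g i v * (\<Prod>j\<in>A-{i}. g j (\<alpha> j))"
proof -
  have "(\<Prod>j\<in>A. g j ((\<alpha>(i:=v)) j)) = g i v * (\<Prod>j\<in>A-{i}. g j ((\<alpha>(i:=v)) j))"
    using prod.remove[OF assms(2) assms(1), of "\<lambda>j. g j ((\<alpha>(i:=v)) j)"] by simp
  also have "(\<Prod>j\<in>A-{i}. g j ((\<alpha>(i:=v)) j)) = (\<Prod>j\<in>A-{i}. g j (\<alpha> j))"
    by (rule prod.cong) auto
  finally show ?thesis .
qed

lemma bern_mult_bary:
  assumes "i \<le> n"
  shows "bernstein n k \<alpha> x * bary n x i =
     (real (\<alpha> i) + 1) / (real k + 1) * bernstein n (Suc k) (\<alpha>(i := Suc (\<alpha> i))) x"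
proof -
  have iA: "i \<in> {0..n}" using assms by auto
  let ?F = "(\<Prod>j\<in>{0..n}-{i}. fact (\<alpha> j) :: real)"
  let ?P = "(\<Prod>j\<in>{0..n}-{i}. bary n x j ^ \<alpha> j)"
  have F: "(\<Prod>j=0..n. fact (\<alpha> j) :: real) = fact (\<alpha> i) * ?F"
    using prod.remove[OF _ iA, of "\<lambda>j. fact (\<alpha> j) :: real"] by simp
  have F2: "(\<Prod>j=0..n. fact ((\<alpha>(i := Suc (\<alpha> i))) j) :: real) = fact (Suc (\<alpha> i)) * ?F"
    using prod_upd[OF iA, of "\<lambda>j v. fact v :: real"] by simp
  have P: "(\<Prod>j=0..n. bary n x j ^ \<alpha> j) = bary n x i ^ \<alpha> i * ?P"
    using prod.remove[OF _ iA, of "\<lambda>j. bary n x j ^ \<alpha> j"] by simp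
  have P2: "(\<Prod>j=0..n. bary n x j ^ (\<alpha>(i := Suc (\<alpha> i))) j) = bary n x i ^ Suc (\<alpha> i) * ?P"
    using prod_upd[OF iA, of "\<lambda>j v. bary n x j ^ v"] by simp
  have Fpos: "?F \<noteq> 0" by (simp add: prod_zero_iff)
  have e1: "fact (Suc (\<alpha> i)) = (real (\<alpha> i) + 1) * fact (\<alpha> i)" by simp
  have e2: "fact (Suc k) = (real k + 1) * fact k" by simp
  have fa: "fact (\<alpha> i) \<noteq> (0::real)" by simp
  have "real k + 1 \<noteq> 0" "real (\<alpha> i) + 1 \<noteq> 0" by linarith+

  have alg0: "\<And>K A F c d X::real. A \<noteq> 0 \<Longrightarrow> F \<noteq> 0 \<Longrightarrow> c \<noteq> 0 \<Longrightarrow> d \<noteq> 0 \<Longrightarrow>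
     K / (A * F) * X = c / d * ((d * K) / ((c * A) * F) * X)"
    by (simp add: field_simps)
  have alg: "\<And>K A F a k b P::real. \<And>m::nat. A \<noteq> 0 \<Longrightarrow> F \<noteq> 0 \<Longrightarrow> a + 1 \<noteq> 0 \<Longrightarrow> k + 1 \<noteq> 0 \<Longrightarrow>
     K / (A * F) * (b ^ m * P) * b = (a + 1) / (k + 1) * (((k + 1) * K) / (((a + 1) * A) * F) * ((b * b ^ m) * P))"
  proof -
    fix K A F a k b P :: real and m :: nat
    assume h: "A \<noteq> 0" "F \<noteq> 0" "a + 1 \<noteq> 0" "k + 1 \<noteq> 0"
    have "K / (A * F) * (b ^ m * P) * b = K / (A * F) * ((b * b ^ m) * P)" by (simp add: ac_simps)
    also have "\<dots> = (a + 1) / (k + 1) * (((k + 1) * K) / (((a + 1) * A) * F) * ((b * b ^ m) * P))"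
      by (rule alg0) (use h in auto)
    finally show "K / (A * F) * (b ^ m * P) * b = (a + 1) / (k + 1) * (((k + 1) * K) / (((a + 1) * A) * F) * ((b * b ^ m) * P))" .
  qed
  show ?thesis
    unfolding bernstein_def F F2 P P2 e1 e2 power_Suc
    by (rule alg) (use Fpos fa \<open>real k + 1 \<noteq> 0\<close> \<open>real (\<alpha> i) + 1 \<noteq> 0\<close> in auto)
qed

lemma sum_upd:
  assumes "i \<in> A" "finite A"
  shows "(\<Sum>j\<in>A. (\<alpha>(i:=v)) j) = v + (\<Sum>j\<in>A-{i}. \<alpha> j)"
proof -
  have "(\<Sum>j\<in>A. (\<alpha>(i:=v)) j) = v + (\<Sum>j\<in>A-{i}. (\<alpha>(i:=v)) j)"
    using sum.remove[OF assms(2) assms(1), of "\<lambda>j. (\<alpha>(i:=v)) j"] by simp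
  also have "(\<Sum>j\<in>A-{i}. (\<alpha>(i:=v)) j) = (\<Sum>j\<in>A-{i}. \<alpha> j)"
    by (rule sum.cong) auto
  finally show ?thesis .
qed

lemma sum_rem: "i \<in> A \<Longrightarrow> finite A \<Longrightarrow> (\<Sum>j\<in>A. (\<alpha>::nat\<Rightarrow>nat) j) = \<alpha> i + (\<Sum>j\<in>A-{i}. \<alpha> j)"
  by (rule sum.remove)

lemma reindex_up:
  assumes "i \<le> n"
  shows "(\<Sum>\<alpha>\<in>multi_idx n k. h (\<alpha>(i := Suc (\<alpha> i)))) = (\<Sum>\<gamma>\<in>{\<gamma>\<in>multi_idx n (Suc k). 1 \<le> \<gamma> i}. h \<gamma>)"
proof (rule sum.reindex_bij_witness[where i = "\<lambda>\<gamma>. \<gamma>(i := \<gamma> i - 1)" and j = "\<lambda>\<alpha>. \<alpha>(i := Suc (\<alpha> i))"])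
  have iA: "i \<in> {0..n}" using assms by auto
  fix \<alpha> assume a: "\<alpha> \<in> multi_idx n k"
  show "\<alpha>(i := Suc (\<alpha> i), i := (\<alpha>(i := Suc (\<alpha> i))) i - 1) = \<alpha>" by auto
  have "(\<Sum>j=0..n. (\<alpha>(i := Suc (\<alpha> i))) j) = Suc k"
    using a sum_upd[OF iA, of \<alpha> "Suc (\<alpha> i)"] sum_rem[OF iA, of \<alpha>] by (simp add: multi_idx_def)
  moreover have "\<forall>j>n. (\<alpha>(i := Suc (\<alpha> i))) j = 0"
    using a assms unfolding multi_idx_def by auto
  ultimately show "\<alpha>(i := Suc (\<alpha> i)) \<in> {\<gamma> \<in> multi_idx n (Suc k). 1 \<le> \<gamma> i}"
    unfolding multi_idx_def by simp
  show "h (\<alpha>(i := Suc (\<alpha> i))) = h (\<alpha>(i := Suc (\<alpha> i)))" ..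
next
  have iA: "i \<in> {0..n}" using assms by auto
  fix \<gamma> assume g: "\<gamma> \<in> {\<gamma> \<in> multi_idx n (Suc k). 1 \<le> \<gamma> i}"
  show "\<gamma>(i := \<gamma> i - 1, i := Suc ((\<gamma>(i := \<gamma> i - 1)) i)) = \<gamma>" using g by auto
  have "(\<Sum>j=0..n. (\<gamma>(i := \<gamma> i - 1)) j) = k"
    using g sum_upd[OF iA, of \<gamma> "\<gamma> i - 1"] sum_rem[OF iA, of \<gamma>] by (simp add: multi_idx_def)
  moreover have "\<forall>j>n. (\<gamma>(i := \<gamma> i - 1)) j = 0"
    using g assms unfolding multi_idx_def by auto
  ultimately show "\<gamma>(i := \<gamma> i - 1) \<in> multi_idx n k"
    unfolding multi_idx_def by blast
qed

definition rep :: "nat \<Rightarrow> nat \<Rightarrow> ((nat \<Rightarrow> nat) \<Rightarrow> real) \<Rightarrow> ((nat \<Rightarrow> real) \<Rightarrow> real) \<Rightarrow> bool" where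
  "rep n k b F \<longleftrightarrow> (\<forall>x. F x = (\<Sum>\<alpha>\<in>multi_idx n k. b \<alpha> * bernstein n k \<alpha> x))"

definition elev :: "nat \<Rightarrow> nat \<Rightarrow> ((nat \<Rightarrow> nat) \<Rightarrow> real) \<Rightarrow> (nat \<Rightarrow> nat) \<Rightarrow> real" where
  "elev n k b \<alpha> = (\<Sum>i=0..n. real (\<alpha> i) / (real k + 1) * b (\<alpha>(i := \<alpha> i - 1)))"

lemma elevate:
  assumes "rep n k b F"
  shows "rep n (Suc k) (elev n k b) F"
  unfolding rep_def
proof
  fix x
  have "F x = (\<Sum>\<alpha>\<in>multi_idx n k. b \<alpha> * bernstein n k \<alpha> x) * (\<Sum>i=0..n. bary n x i)"
    using assms by (simp add: rep_def bary_sum)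
  also have "\<dots> = (\<Sum>i=0..n. \<Sum>\<alpha>\<in>multi_idx n k. b \<alpha> * (bernstein n k \<alpha> x * bary n x i))"
    unfolding sum_distrib_left sum_distrib_right mult.assoc by simp
  also have "\<dots> = (\<Sum>i=0..n. \<Sum>\<alpha>\<in>multi_idx n k. 
      (\<lambda>\<gamma>. real (\<gamma> i) / (real k + 1) * b (\<gamma>(i := \<gamma> i - 1)) * bernstein n (Suc k) \<gamma> x) (\<alpha>(i := Suc (\<alpha> i))))"
    by (intro sum.cong refl) (simp add: bern_mult_bary)
  also have "\<dots> = (\<Sum>i=0..n. \<Sum>\<gamma>\<in>{\<gamma>\<in>multi_idx n (Suc k). 1 \<le> \<gamma> i}. 
      real (\<gamma> i) / (real k + 1) * b (\<gamma>(i := \<gamma> i - 1)) * bernstein n (Suc k) \<gamma> x)"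
    by (intro sum.cong refl reindex_up) simp
  also have "\<dots> = (\<Sum>i=0..n. \<Sum>\<gamma>\<in>multi_idx n (Suc k). 
      real (\<gamma> i) / (real k + 1) * b (\<gamma>(i := \<gamma> i - 1)) * bernstein n (Suc k) \<gamma> x)"
    by (intro sum.cong refl sum.mono_neutral_left) (auto simp: finite_multi_idx)
  also have "\<dots> = (\<Sum>\<gamma>\<in>multi_idx n (Suc k). elev n k b \<gamma> * bernstein n (Suc k) \<gamma> x)"
    unfolding elev_def sum_distrib_right by (rule sum.swap)
  finally show "F x = (\<Sum>\<gamma>\<in>multi_idx n (Suc k). elev n k b \<gamma> * bernstein n (Suc k) \<gamma> x)" .
qed

lemma rep_cong: "rep n k b F \<Longrightarrow> (\<And>\<alpha>. \<alpha> \<in> multi_idx n k \<Longrightarrow> b \<alpha> = b' \<alpha>) \<Longrightarrow> rep n k b' F"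
  unfolding rep_def by (metis (no_types, lifting) sum.cong)

definition ffr :: "nat \<Rightarrow> nat \<Rightarrow> real" where
  "ffr a g = (\<Prod>s<g. real a - real s)"

lemma ffr_Suc: "ffr a (Suc b) = ffr a b * (real a - real b)"
  unfolding ffr_def by simp

lemma ffr_Suc2: "ffr a (Suc b) = real a * ffr (a - 1) b"
proof (cases a)
  case 0 thus ?thesis unfolding ffr_def by (subst prod.lessThan_Suc_shift) simp
next
  case (Suc a')
  have "ffr a (Suc b) = (real a - 0) * (\<Prod>s<b. real a - real (Suc s))"
    unfolding ffr_def by (subst prod.lessThan_Suc_shift) simp
  also have "(\<Prod>s<b. real a - real (Suc s)) = ffr (a - 1) b"
    unfolding ffr_def using Suc by (intro prod.cong) auto
  finally show ?thesis by simp
qed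

lemma ffr_shift: "real a * ffr (a - 1) b = (real a - real b) * ffr a b"
  using ffr_Suc[of a b] ffr_Suc2[of a b] by simp

lemma ffr_zero: "a < b \<Longrightarrow> ffr a b = 0"
  unfolding ffr_def by (intro prod_zero) (auto intro!: bexI[of _ a])

lemma ffr_nz: "b \<le> a \<Longrightarrow> ffr a b \<noteq> 0"
  unfolding ffr_def by (auto simp: prod_zero_iff)

lemma ffr_self: "ffr a a = fact a"
proof (induction a)
  case 0 thus ?case by (simp add: ffr_def)
next
  case (Suc a)
  have "ffr (Suc a) (Suc a) = real (Suc a) * ffr a a" using ffr_Suc2[of "Suc a" a] by simp
  thus ?case using Suc by simp
qed

lemma ffr_0: "ffr a 0 = 1" by (simp add: ffr_def)

definition mc :: "nat \<Rightarrow> (nat \<Rightarrow> nat) \<Rightarrow> nat \<Rightarrow> (nat \<Rightarrow> nat) \<Rightarrow> real" where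
  "mc n \<beta> k \<alpha> = (\<Prod>i=0..n. ffr (\<alpha> i) (\<beta> i)) / ffr k (\<Sum>i=0..n. \<beta> i)"

lemma elev_mc:
  assumes "\<alpha> \<in> multi_idx n (Suc k)" "(\<Sum>i=0..n. \<beta> i) \<le> k"
  shows "elev n k (mc n \<beta> k) \<alpha> = mc n \<beta> (Suc k) \<alpha>"
proof -
  let ?m = "\<Sum>i=0..n. \<beta> i"
  let ?P = "\<Prod>j=0..n. ffr (\<alpha> j) (\<beta> j)"
  have sa: "(\<Sum>i=0..n. \<alpha> i) = Suc k" using assms(1) by (simp add: multi_idx_def)
  have tm: "real (\<alpha> i) * (\<Prod>j=0..n. ffr ((\<alpha>(i := \<alpha> i - 1)) j) (\<beta> j)) = (real (\<alpha> i) - real (\<beta> i)) * ?P"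
    if "i \<in> {0..n}" for i
  proof -
    have "(\<Prod>j=0..n. ffr ((\<alpha>(i := \<alpha> i - 1)) j) (\<beta> j)) = ffr (\<alpha> i - 1) (\<beta> i) * (\<Prod>j\<in>{0..n}-{i}. ffr (\<alpha> j) (\<beta> j))"
      using prod_upd[OF that, of "\<lambda>j v. ffr v (\<beta> j)"] by simp
    moreover have "?P = ffr (\<alpha> i) (\<beta> i) * (\<Prod>j\<in>{0..n}-{i}. ffr (\<alpha> j) (\<beta> j))"
      using prod.remove[OF _ that, of "\<lambda>j. ffr (\<alpha> j) (\<beta> j)"] by simp
    ultimately show ?thesis using ffr_shift[of "\<alpha> i" "\<beta> i"] by (simp add: mult.assoc[symmetric])
  qed
  have "elev n k (mc n \<beta> k) \<alpha> = (\<Sum>i=0..n. real (\<alpha> i) * (\<Prod>j=0..n. ffr ((\<alpha>(i := \<alpha> i - 1)) j) (\<beta> j))) / ((real k + 1) * ffr k ?m)"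
    unfolding elev_def mc_def sum_divide_distrib by (intro sum.cong refl) simp
  also have "\<dots> = (\<Sum>i=0..n. (real (\<alpha> i) - real (\<beta> i)) * ?P) / ((real k + 1) * ffr k ?m)"
    using tm by simp
  also have "(\<Sum>i=0..n. (real (\<alpha> i) - real (\<beta> i)) * ?P) = (real (Suc k) - real ?m) * ?P"
    unfolding sum_distrib_right[symmetric] sum_subtractf using sa
    by (metis of_nat_sum)
  also have "(real k + 1) * ffr k ?m = (real (Suc k) - real ?m) * ffr (Suc k) ?m"
    using ffr_Suc[of "Suc k" ?m] ffr_Suc2[of "Suc k" ?m] by (simp add: mult.commute add.commute)
  also have "(real (Suc k) - real ?m) * ?P / ((real (Suc k) - real ?m) * ffr (Suc k) ?m) = ?P / ffr (Suc k) ?m"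
  proof -
    have "real ?m \<le> real k" using assms(2) by (simp only: of_nat_le_iff)
    hence "real (Suc k) - real ?m \<noteq> 0" by simp
    thus ?thesis by simp
  qed
  finally show ?thesis unfolding mc_def .
qed

lemma mono_rep:
  assumes "\<beta> \<in> monomial_exps n l" "(\<Sum>i=0..n. \<beta> i) \<le> k"
  shows "rep n k (mc n \<beta> k) (\<lambda>x. \<Prod>i=1..n. x i ^ \<beta> i)"
  using assms(2)
proof (induction k rule: dec_induct)
  case base
  let ?m = "\<Sum>i=0..n. \<beta> i"
  have b0: "\<beta> 0 = 0" and bz: "\<forall>i>n. \<beta> i = 0" using assms(1) by (auto simp: monomial_exps_def)
  have bI: "\<beta> \<in> multi_idx n ?m" using bz by (simp add: multi_idx_def)
  have zero: "mc n \<beta> ?m \<alpha> = 0" if "\<alpha> \<in> multi_idx n ?m" "\<alpha> \<noteq> \<beta>" for \<alpha>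
  proof -
    have "\<exists>i\<in>{0..n}. \<alpha> i < \<beta> i"
    proof (rule ccontr)
      assume "\<not> ?thesis"
      hence ge: "\<forall>i\<in>{0..n}. \<beta> i \<le> \<alpha> i" by auto
      have sa: "(\<Sum>i=0..n. \<alpha> i) = ?m" using that by (simp add: multi_idx_def)
      have "\<forall>i\<in>{0..n}. \<alpha> i = \<beta> i"
        using sum_mono_inv[where f=\<beta> and g=\<alpha> and I="{0..n}"] ge sa by auto
      moreover have "\<forall>i>n. \<alpha> i = 0" using that by (simp add: multi_idx_def)
      ultimately have "\<alpha> = \<beta>" using bz by (metis atLeastAtMost_iff not_le zero_le ext)
      with that show False by simp
    qed
    then obtain i where "i \<in> {0..n}" "\<alpha> i < \<beta> i" by blast
    hence "(\<Prod>i=0..n. ffr (\<alpha> i) (\<beta> i)) = 0" by (intro prod_zero) (auto intro!: bexI ffr_zero)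
    thus ?thesis by (simp add: mc_def)
  qed
  show ?case unfolding rep_def
  proof
    fix x
    have "(\<Sum>\<alpha>\<in>multi_idx n ?m. mc n \<beta> ?m \<alpha> * bernstein n ?m \<alpha> x) = mc n \<beta> ?m \<beta> * bernstein n ?m \<beta> x"
      by (rule sum.mono_neutral_left[of _ "{\<beta>}", simplified, symmetric]) (auto simp: finite_multi_idx bI zero)
    also have "mc n \<beta> ?m \<beta> = (\<Prod>i=0..n. fact (\<beta> i)) / fact ?m" by (simp add: mc_def ffr_self)
    also have "bernstein n ?m \<beta> x = fact ?m / (\<Prod>i=0..n. fact (\<beta> i)) * (\<Prod>i=0..n. bary n x i ^ \<beta> i)"
      by (simp add: bernstein_def)
    also have "(\<Prod>i=0..n. bary n x i ^ \<beta> i) = (\<Prod>i=1..n. x i ^ \<beta> i)"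
    proof -
      have "{0..n} = insert 0 {1..n}" by auto
      hence "(\<Prod>i=0..n. bary n x i ^ \<beta> i) = bary n x 0 ^ \<beta> 0 * (\<Prod>i=1..n. bary n x i ^ \<beta> i)" by simp
      also have "(\<Prod>i=1..n. bary n x i ^ \<beta> i) = (\<Prod>i=1..n. x i ^ \<beta> i)" by (intro prod.cong) (auto simp: bary_def)
      finally show ?thesis using b0 by simp
    qed
    finally show "(\<Prod>i=1..n. x i ^ \<beta> i) = (\<Sum>\<alpha>\<in>multi_idx n ?m. mc n \<beta> ?m \<alpha> * bernstein n ?m \<alpha> x)"
      by (simp add: prod_zero_iff)
  qed
next
  case (step k)
  show ?case
    by (rule rep_cong[OF elevate[OF step.IH]]) (rule elev_mc, use step in auto)
qed

lemma univ_zero: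
  fixes c :: "nat \<Rightarrow> real"
  assumes "\<forall>t. t \<noteq> t0 \<longrightarrow> (\<Sum>j\<le>d. c j * t^j) = 0"
  shows "\<forall>j\<le>d. c j = 0"
proof (rule ccontr)
  assume "\<not> ?thesis"
  then obtain k where "k \<le> d" "c k \<noteq> 0" by auto
  hence fin: "finite {z. (\<Sum>j\<le>d. c j * z^j) = 0}" using polyfun_roots_finite by blast
  have "UNIV - {t0} \<subseteq> {z. (\<Sum>j\<le>d. c j * z^j) = 0}" using assms by auto
  hence "finite (UNIV - {t0} :: real set)" using fin finite_subset by blast
  thus False by (simp add: infinite_UNIV_char_0)
qed

lemma indep:
  fixes A :: "(nat \<Rightarrow> nat) set" and b :: "(nat \<Rightarrow> nat) \<Rightarrow> real"
  assumes "finite A" "\<forall>\<alpha>\<in>A. \<forall>i\<ge>m. \<alpha> i = 0"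
    "\<forall>y::nat\<Rightarrow>real. (m = 0 \<or> (\<Sum>i<m. y i) \<noteq> 0) \<longrightarrow> (\<Sum>\<alpha>\<in>A. b \<alpha> * (\<Prod>i<m. y i ^ \<alpha> i)) = 0"
  shows "\<forall>\<alpha>\<in>A. b \<alpha> = 0"
  using assms
proof (induction m arbitrary: A b)
  case 0
  have "A \<subseteq> {\<lambda>_. 0}" using 0(2) by auto
  hence "A = {} \<or> A = {\<lambda>_. 0}" by blast
  thus ?case using 0(3) by auto
next
  case (Suc m)
  define d where "d = Max (insert 0 ((\<lambda>\<alpha>. \<alpha> m) ` A))"
  have dle: "\<alpha> m \<le> d" if "\<alpha> \<in> A" for \<alpha> unfolding d_def using Suc.prems(1) that by auto
  define c where "c y j = (\<Sum>\<alpha>\<in>{\<alpha>\<in>A. \<alpha> m = j}. b \<alpha> * (\<Prod>i<m. y i ^ \<alpha> i))" for y :: "nat \<Rightarrow> real" and j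
  have split: "(\<Sum>\<alpha>\<in>A. b \<alpha> * (\<Prod>i<Suc m. y i ^ \<alpha> i)) = (\<Sum>j\<le>d. c y j * y m ^ j)" for y
  proof -
    have "(\<Sum>\<alpha>\<in>A. b \<alpha> * (\<Prod>i<Suc m. y i ^ \<alpha> i)) = (\<Sum>j\<le>d. \<Sum>\<alpha>\<in>{\<alpha>\<in>A. \<alpha> m = j}. b \<alpha> * (\<Prod>i<Suc m. y i ^ \<alpha> i))"
      by (rule sum.group[symmetric]) (use Suc.prems(1) dle in auto)
    also have "\<dots> = (\<Sum>j\<le>d. c y j * y m ^ j)"
      unfolding c_def sum_distrib_right
      by (intro sum.cong refl) (auto simp: mult.assoc)
    finally show ?thesis .
  qed
  have c0: "c y j = 0" for y j
  proof (cases "j \<le> d")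
    case True
    let ?t0 = "- (\<Sum>i<m. y i)"
    have "\<forall>t. t \<noteq> ?t0 \<longrightarrow> (\<Sum>j\<le>d. c y j * t^j) = 0"
    proof (intro allI impI)
      fix t assume t: "t \<noteq> ?t0"
      let ?l = "y(m := t)"
      have cl: "c ?l j = c y j" for j unfolding c_def by (intro sum.cong refl) auto
      have "(\<Sum>i<Suc m. ?l i) \<noteq> 0"
      proof -
        have "(\<Sum>i<m. ?l i) = (\<Sum>i<m. y i)" by (intro sum.cong) auto
        thus ?thesis using t by simp
      qed
      hence "(\<Sum>\<alpha>\<in>A. b \<alpha> * (\<Prod>i<Suc m. ?l i ^ \<alpha> i)) = 0" using Suc.prems(3) by blast
      thus "(\<Sum>j\<le>d. c y j * t^j) = 0" unfolding split cl by simp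
    qed
    thus ?thesis using univ_zero True by blast
  next
    case False
    hence e: "{\<alpha>\<in>A. \<alpha> m = j} = {}" using dle by fastforce
    show ?thesis unfolding c_def e by (rule sum.empty)
  qed
  show ?case
  proof
    fix \<alpha> assume aA: "\<alpha> \<in> A"
    let ?j = "\<alpha> m"
    let ?S = "{\<alpha>'\<in>A. \<alpha>' m = ?j}"
    let ?A' = "(\<lambda>\<gamma>. \<gamma>(m := 0)) ` ?S"
    let ?b' = "\<lambda>\<gamma>. b (\<gamma>(m := ?j))"
    have inj: "inj_on (\<lambda>\<gamma>. \<gamma>(m := 0)) ?S"
    proof (rule inj_onI)
      fix x y assume "x \<in> ?S" "y \<in> ?S" "x(m := 0) = y(m := 0)"
      thus "x = y" by (metis (mono_tags, lifting) fun_upd_idem_iff fun_upd_upd mem_Collect_eq)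
    qed
    have "\<forall>\<gamma>\<in>?A'. ?b' \<gamma> = 0"
    proof (rule Suc.IH)
      show "finite ?A'" using Suc.prems(1) by simp
      show "\<forall>\<gamma>\<in>?A'. \<forall>i\<ge>m. \<gamma> i = 0" using Suc.prems(2) by auto
      show "\<forall>y. (m = 0 \<or> (\<Sum>i<m. y i) \<noteq> 0) \<longrightarrow> (\<Sum>\<gamma>\<in>?A'. ?b' \<gamma> * (\<Prod>i<m. y i ^ \<gamma> i)) = 0"
      proof (intro allI impI)
        fix y :: "nat \<Rightarrow> real"
        have "(\<Sum>\<gamma>\<in>?A'. ?b' \<gamma> * (\<Prod>i<m. y i ^ \<gamma> i)) = (\<Sum>\<gamma>\<in>?S. ?b' (\<gamma>(m:=0)) * (\<Prod>i<m. y i ^ (\<gamma>(m:=0)) i))"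
          by (rule sum.reindex[OF inj, unfolded comp_def])
        also have "\<dots> = c y ?j" unfolding c_def
        proof (intro sum.cong refl)
          fix x assume "x \<in> ?S"
          hence "x(m := 0, m := ?j) = x" by auto
          moreover have "(\<Prod>i<m. y i ^ (x(m:=0)) i) = (\<Prod>i<m. y i ^ x i)" by (intro prod.cong) auto
          ultimately show "?b' (x(m:=0)) * (\<Prod>i<m. y i ^ (x(m:=0)) i) = b x * (\<Prod>i<m. y i ^ x i)" by simp
        qed
        finally show "(\<Sum>\<gamma>\<in>?A'. ?b' \<gamma> * (\<Prod>i<m. y i ^ \<gamma> i)) = 0" using c0 by simp
      qed
    qed
    moreover have "\<alpha>(m := 0) \<in> ?A'" using aA by auto
    ultimately have "b (\<alpha>(m := 0, m := ?j)) = 0" by blast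
    thus "b \<alpha> = 0" by simp
  qed
qed

lemma rep_zero:
  assumes "\<forall>x. (\<Sum>\<alpha>\<in>multi_idx n k. d \<alpha> * bernstein n k \<alpha> x) = 0" "\<alpha> \<in> multi_idx n k"
  shows "d \<alpha> = 0"
proof -
  define e where "e \<alpha> = d \<alpha> * (fact k / (\<Prod>i=0..n. fact (\<alpha> i)))" for \<alpha>
  have lt: "{..<Suc n} = {0..n}" by auto
  have "\<forall>\<alpha>\<in>multi_idx n k. e \<alpha> = 0"
  proof (rule indep[where m = "Suc n"])
    show "finite (multi_idx n k)" by (rule finite_multi_idx)
    show "\<forall>\<alpha>\<in>multi_idx n k. \<forall>i\<ge>Suc n. \<alpha> i = 0" by (auto simp: multi_idx_def)
    show "\<forall>y::nat\<Rightarrow>real. (Suc n = 0 \<or> (\<Sum>i<Suc n. y i) \<noteq> 0) \<longrightarrow>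
       (\<Sum>\<alpha>\<in>multi_idx n k. e \<alpha> * (\<Prod>i<Suc n. y i ^ \<alpha> i)) = 0"
    proof (intro allI impI)
      fix y :: "nat \<Rightarrow> real"
      assume "Suc n = 0 \<or> (\<Sum>i<Suc n. y i) \<noteq> 0"
      hence s0: "(\<Sum>i=0..n. y i) \<noteq> 0" unfolding lt by simp
      define s where "s = (\<Sum>i=0..n. y i)"
      define x where "x i = y i / s" for i
      have bx: "bary n x i = y i / s" if "i \<le> n" for i
      proof (cases "i = 0")
        case True
        have "{0..n} = insert 0 {1..n}" by auto
        hence "s = y 0 + (\<Sum>i=1..n. y i)" unfolding s_def by simp
        moreover have "(\<Sum>j=1..n. x j) = (\<Sum>j=1..n. y j) / s" unfolding x_def sum_divide_distrib ..
        ultimately show ?thesis using True s0 unfolding bary_def s_def by (simp add: field_simps)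
      next
        case False thus ?thesis by (simp add: bary_def x_def)
      qed
      have "(\<Sum>\<alpha>\<in>multi_idx n k. e \<alpha> * (\<Prod>i<Suc n. y i ^ \<alpha> i)) =
            (\<Sum>\<alpha>\<in>multi_idx n k. s ^ k * (d \<alpha> * bernstein n k \<alpha> x))"
      proof (intro sum.cong refl)
        fix \<alpha> assume a: "\<alpha> \<in> multi_idx n k"
        have "(\<Prod>i=0..n. bary n x i ^ \<alpha> i) = (\<Prod>i=0..n. y i ^ \<alpha> i / s ^ \<alpha> i)"
          by (intro prod.cong refl) (simp add: bx power_divide)
        also have "\<dots> = (\<Prod>i=0..n. y i ^ \<alpha> i) / (\<Prod>i=0..n. s ^ \<alpha> i)" by (rule prod_dividef)
        also have "(\<Prod>i=0..n. s ^ \<alpha> i) = s ^ k" using a by (simp add: power_sum[symmetric] multi_idx_def)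
        finally have "(\<Prod>i=0..n. bary n x i ^ \<alpha> i) = (\<Prod>i=0..n. y i ^ \<alpha> i) / s ^ k" .
        thus "e \<alpha> * (\<Prod>i<Suc n. y i ^ \<alpha> i) = s ^ k * (d \<alpha> * bernstein n k \<alpha> x)"
          unfolding e_def bernstein_def lt using s0 by (simp add: s_def field_simps)
      qed
      also have "\<dots> = s ^ k * (\<Sum>\<alpha>\<in>multi_idx n k. d \<alpha> * bernstein n k \<alpha> x)"
        by (simp add: sum_distrib_left)
      finally show "(\<Sum>\<alpha>\<in>multi_idx n k. e \<alpha> * (\<Prod>i<Suc n. y i ^ \<alpha> i)) = 0" using assms(1) by simp
    qed
  qed
  hence "e \<alpha> = 0" using assms(2) by blast
  moreover have "fact k / (\<Prod>i=0..n. fact (\<alpha> i)) \<noteq> (0::real)" by (simp add: prod_zero_iff)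
  ultimately show ?thesis unfolding e_def by simp
qed

lemma rep_unique:
  assumes "rep n k b F" "rep n k b' F" "\<alpha> \<in> multi_idx n k"
  shows "b \<alpha> = b' \<alpha>"
proof -
  have "\<forall>x. (\<Sum>\<alpha>\<in>multi_idx n k. (b \<alpha> - b' \<alpha>) * bernstein n k \<alpha> x) = 0"
    using assms(1,2) unfolding rep_def by (simp add: left_diff_distrib sum_subtractf)
  from rep_zero[OF this assms(3)] show ?thesis by simp
qed

lemma bc_eq:
  assumes "rep n k b F" "\<alpha> \<in> multi_idx n k"
  shows "bernstein_coeffs n k F \<alpha> = b \<alpha>"
proof -
  let ?b0 = "\<lambda>\<alpha>. if \<alpha> \<in> multi_idx n k then b \<alpha> else 0"
  have r0: "rep n k ?b0 F" by (rule rep_cong[OF assms(1)]) simp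
  have "bernstein_coeffs n k F = ?b0"
    unfolding bernstein_coeffs_def
  proof (rule the_equality)
    show "(\<forall>\<alpha>. \<alpha> \<notin> multi_idx n k \<longrightarrow> ?b0 \<alpha> = 0) \<and> (\<forall>x. F x = (\<Sum>\<alpha>\<in>multi_idx n k. ?b0 \<alpha> * bernstein n k \<alpha> x))"
      using r0 unfolding rep_def by simp
  next
    fix b' assume h: "(\<forall>\<alpha>. \<alpha> \<notin> multi_idx n k \<longrightarrow> b' \<alpha> = 0) \<and> (\<forall>x. F x = (\<Sum>\<alpha>\<in>multi_idx n k. b' \<alpha> * bernstein n k \<alpha> x))"
    hence "rep n k b' F" unfolding rep_def by blast
    hence "\<And>\<alpha>. \<alpha> \<in> multi_idx n k \<Longrightarrow> b' \<alpha> = ?b0 \<alpha>" using rep_unique r0 by blast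
    thus "b' = ?b0" using h by (auto simp: fun_eq_iff)
  qed
  thus ?thesis using assms(2) by simp
qed

lemma finite_monomial_exps: "finite (monomial_exps n l)"
proof -
  have "monomial_exps n l \<subseteq> (\<lambda>f i. if i \<in> {1..n} then f i else 0) ` (PiE {1..n} (\<lambda>_. {0..l}))"
  proof
    fix \<beta> assume a: "\<beta> \<in> monomial_exps n l"
    hence s: "(\<Sum>i=1..n. \<beta> i) \<le> l" and z: "\<forall>i. i \<notin> {1..n} \<longrightarrow> \<beta> i = 0" by (auto simp: monomial_exps_def)
    have le: "\<beta> i \<le> l" if "i \<in> {1..n}" for i
      using member_le_sum[of i "{1..n}" \<beta>] that s by auto
    have "\<beta> = (\<lambda>i. if i \<in> {1..n} then restrict \<beta> {1..n} i else 0)"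
      using z by (auto simp: fun_eq_iff)
    moreover have "restrict \<beta> {1..n} \<in> PiE {1..n} (\<lambda>_. {0..l})" using le by auto
    ultimately show "\<beta> \<in> (\<lambda>f i. if i \<in> {1..n} then f i else 0) ` (PiE {1..n} (\<lambda>_. {0..l}))"
      by blast
  qed
  thus ?thesis by (rule finite_subset) (auto intro!: finite_PiE)
qed

lemma mono_deg:
  assumes "\<beta> \<in> monomial_exps n l"
  shows "(\<Sum>i=0..n. \<beta> i) = (\<Sum>i=1..n. \<beta> i)" "(\<Sum>i=0..n. \<beta> i) \<le> l"
proof -
  have "{0..n} = insert 0 {1..n}" by auto
  moreover have "\<beta> 0 = 0" using assms by (auto simp: monomial_exps_def)
  ultimately show e: "(\<Sum>i=0..n. \<beta> i) = (\<Sum>i=1..n. \<beta> i)" by simp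
  show "(\<Sum>i=0..n. \<beta> i) \<le> l" using assms unfolding e by (auto simp: monomial_exps_def)
qed

lemma rep_sum:
  assumes "finite M" "\<And>\<beta>. \<beta> \<in> M \<Longrightarrow> rep n k (B \<beta>) (G \<beta>)"
  shows "rep n k (\<lambda>\<alpha>. \<Sum>\<beta>\<in>M. c \<beta> * B \<beta> \<alpha>) (\<lambda>x. \<Sum>\<beta>\<in>M. c \<beta> * G \<beta> x)"
  unfolding rep_def
proof
  fix x
  have "(\<Sum>\<beta>\<in>M. c \<beta> * G \<beta> x) = (\<Sum>\<beta>\<in>M. c \<beta> * (\<Sum>\<alpha>\<in>multi_idx n k. B \<beta> \<alpha> * bernstein n k \<alpha> x))"
    using assms(2) unfolding rep_def by simp
  also have "\<dots> = (\<Sum>\<alpha>\<in>multi_idx n k. (\<Sum>\<beta>\<in>M. c \<beta> * B \<beta> \<alpha>) * bernstein n k \<alpha> x)"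
    unfolding sum_distrib_left sum_distrib_right by (subst sum.swap) (simp add: mult.assoc)
  finally show "(\<Sum>\<beta>\<in>M. c \<beta> * G \<beta> x) = (\<Sum>\<alpha>\<in>multi_idx n k. (\<Sum>\<beta>\<in>M. c \<beta> * B \<beta> \<alpha>) * bernstein n k \<alpha> x)" .
qed

lemma poly_rep:
  assumes "\<forall>x. p x = (\<Sum>\<beta>\<in>monomial_exps n l. c \<beta> * (\<Prod>i=1..n. x i ^ \<beta> i))" "l \<le> k"
  shows "rep n k (\<lambda>\<alpha>. \<Sum>\<beta>\<in>monomial_exps n l. c \<beta> * mc n \<beta> k \<alpha>) p"
proof -
  have "rep n k (\<lambda>\<alpha>. \<Sum>\<beta>\<in>monomial_exps n l. c \<beta> * mc n \<beta> k \<alpha>) (\<lambda>x. \<Sum>\<beta>\<in>monomial_exps n l. c \<beta> * (\<Prod>i=1..n. x i ^ \<beta> i))"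
    by (rule rep_sum[OF finite_monomial_exps]) (rule mono_rep, assumption, use mono_deg assms(2) in fastforce)
  moreover have "p = (\<lambda>x. \<Sum>\<beta>\<in>monomial_exps n l. c \<beta> * (\<Prod>i=1..n. x i ^ \<beta> i))" using assms(1) by auto
  ultimately show ?thesis by simp
qed



lemma prod_diff_le:
  fixes a b :: "'i \<Rightarrow> real"
  assumes "finite S" "\<forall>j\<in>S. \<bar>a j\<bar> \<le> 1" "\<forall>j\<in>S. \<bar>b j\<bar> \<le> 1"
  shows "\<bar>prod a S - prod b S\<bar> \<le> (\<Sum>j\<in>S. \<bar>a j - b j\<bar>)"
  using assms
proof (induction S rule: finite_induct)
  case empty thus ?case by simp
next
  case (insert x F)
  have B1: "\<bar>prod b F\<bar> \<le> 1" unfolding abs_prod using insert.prems by (intro prod_le_1) auto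
  have "\<bar>prod a (insert x F) - prod b (insert x F)\<bar> = \<bar>a x * (prod a F - prod b F) + (a x - b x) * prod b F\<bar>"
    using insert.hyps by (simp add: algebra_simps)
  also have "\<dots> \<le> \<bar>a x\<bar> * \<bar>prod a F - prod b F\<bar> + \<bar>a x - b x\<bar> * \<bar>prod b F\<bar>"
    by (metis abs_mult abs_triangle_ineq)
  also have "\<dots> \<le> 1 * \<bar>prod a F - prod b F\<bar> + \<bar>a x - b x\<bar> * 1"
    using insert.prems B1 by (intro add_mono mult_mono) auto
  also have "\<dots> \<le> (\<Sum>j\<in>F. \<bar>a j - b j\<bar>) + \<bar>a x - b x\<bar>" using insert by simp
  finally show ?case using insert.hyps by simp
qed

lemma ffr_approx:
  assumes "a \<le> k" "g \<le> k" "0 < k"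
  shows "\<bar>ffr a g / real k ^ g - (real a / real k) ^ g\<bar> \<le> real g * real g / real k"
    and "\<bar>ffr a g / real k ^ g\<bar> \<le> 1"
proof -
  have kp: "real k > 0" using assms by simp
  have e1: "ffr a g / real k ^ g = (\<Prod>s<g. (real a - real s) / real k)"
    unfolding ffr_def by (simp add: prod_dividef)
  have e2: "(real a / real k) ^ g = (\<Prod>s<g. real a / real k)" by simp
  have f1: "\<bar>(real a - real s) / real k\<bar> \<le> 1" if "s < g" for s
    using assms that kp by (auto simp: abs_le_iff divide_le_eq_1 le_divide_eq_1 field_simps)
  have f2: "\<bar>real a / real k\<bar> \<le> 1" using assms kp by (simp add: divide_le_eq_1)
  have "\<bar>ffr a g / real k ^ g - (real a / real k) ^ g\<bar> \<le> (\<Sum>s<g. \<bar>(real a - real s) / real k - real a / real k\<bar>)"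
    unfolding e1 e2 by (rule prod_diff_le) (use f1 f2 in auto)
  also have "\<dots> = (\<Sum>s<g. real s / real k)"
    by (intro sum.cong refl) (simp add: diff_divide_distrib)
  also have "\<dots> \<le> (\<Sum>s<g. real g / real k)"
    by (intro sum_mono divide_right_mono) (use kp in auto)
  finally show "\<bar>ffr a g / real k ^ g - (real a / real k) ^ g\<bar> \<le> real g * real g / real k" by simp
  show "\<bar>ffr a g / real k ^ g\<bar> \<le> 1" unfolding e1 abs_prod using f1 by (intro prod_le_1) auto
qed

lemma mc_approx:
  assumes "\<beta> \<in> monomial_exps n l" "\<alpha> \<in> multi_idx n k" "0 < k" "2*l*l \<le> k"
  shows "\<bar>mc n \<beta> k \<alpha> - (\<Prod>i=0..n. (real (\<alpha> i) / real k) ^ \<beta> i)\<bar> \<le> 4 * real l * real l / real k"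
proof -
  define m where "m = (\<Sum>i=0..n. \<beta> i)"
  have ml: "m \<le> l" unfolding m_def using mono_deg(2)[OF assms(1)] .
  have lk: "l \<le> k"
  proof (cases "l = 0")
    case False hence "l \<le> 2*l*l" by simp
    thus ?thesis using assms(4) by linarith
  qed simp
  have mk: "m \<le> k" using ml lk by simp
  have kp: "real k > 0" using assms(3) by simp
  have ak: "\<alpha> i \<le> k" if "i \<in> {0..n}" for i
    using member_le_sum[of i "{0..n}" \<alpha>] that assms(2) by (auto simp: multi_idx_def)
  have bm: "\<beta> i \<le> m" if "i \<in> {0..n}" for i
    using member_le_sum[of i "{0..n}" \<beta>] that unfolding m_def by auto
  define P1 where "P1 = (\<Prod>i=0..n. ffr (\<alpha> i) (\<beta> i) / real k ^ \<beta> i)"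
  define P0 where "P0 = (\<Prod>i=0..n. (real (\<alpha> i) / real k) ^ \<beta> i)"
  define \<rho> where "\<rho> = ffr k m / real k ^ m"
  have "\<bar>P1 - P0\<bar> \<le> (\<Sum>i=0..n. \<bar>ffr (\<alpha> i) (\<beta> i) / real k ^ \<beta> i - (real (\<alpha> i) / real k) ^ \<beta> i\<bar>)"
    unfolding P1_def P0_def
  proof (rule prod_diff_le)
    show "\<forall>j\<in>{0..n}. \<bar>ffr (\<alpha> j) (\<beta> j) / real k ^ \<beta> j\<bar> \<le> 1"
      using ffr_approx(2) ak bm mk assms(3) by (meson le_trans)
    show "\<forall>j\<in>{0..n}. \<bar>(real (\<alpha> j) / real k) ^ \<beta> j\<bar> \<le> 1"
      using ak kp by (auto simp: power_abs intro!: power_le_one divide_le_eq_1[THEN iffD2])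
  qed simp
  also have "\<dots> \<le> (\<Sum>i=0..n. real (\<beta> i) * real m / real k)"
  proof (intro sum_mono)
    fix i assume i: "i \<in> {0..n}"
    have "\<bar>ffr (\<alpha> i) (\<beta> i) / real k ^ \<beta> i - (real (\<alpha> i) / real k) ^ \<beta> i\<bar> \<le> real (\<beta> i) * real (\<beta> i) / real k"
      using ffr_approx(1) ak[OF i] bm[OF i] mk assms(3) by (meson le_trans)
    also have "\<dots> \<le> real (\<beta> i) * real m / real k"
      using bm[OF i] kp by (intro divide_right_mono mult_left_mono) auto
    finally show "\<bar>ffr (\<alpha> i) (\<beta> i) / real k ^ \<beta> i - (real (\<alpha> i) / real k) ^ \<beta> i\<bar> \<le> real (\<beta> i) * real m / real k" .
  qed
  also have "\<dots> = real m * real m / real k"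
    unfolding sum_divide_distrib[symmetric] sum_distrib_right[symmetric] m_def by simp
  finally have d1: "\<bar>P1 - P0\<bar> \<le> real m * real m / real k" .
  have d2: "\<bar>\<rho> - 1\<bar> \<le> real m * real m / real k"
    using ffr_approx(1)[of k k m] mk assms(3) kp unfolding \<rho>_def by simp
  have mm: "real m * real m / real k \<le> real l * real l / real k"
    using ml kp by (intro divide_right_mono mult_mono) auto
  have half: "real l * real l / real k \<le> 1/2"
  proof -
    have "2 * (real l * real l) \<le> real k" using assms(4) by (metis of_nat_le_iff of_nat_mult of_nat_numeral mult.assoc)
    thus ?thesis using kp by (simp add: field_simps)
  qed
  have "1 - \<rho> \<le> real m * real m / real k" using d2 by (simp add: abs_le_iff)
  hence rho: "\<rho> \<ge> 1/2" using mm half by linarith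
  have P0b: "\<bar>P0\<bar> \<le> 1" unfolding P0_def abs_prod
    using ak kp by (intro prod_le_1) (auto simp: power_abs intro!: power_le_one divide_le_eq_1[THEN iffD2])
  have kpow: "(\<Prod>i=0..n. real k ^ \<beta> i) = real k ^ m" unfolding m_def by (simp add: power_sum)
  have mc_eq: "mc n \<beta> k \<alpha> = P1 / \<rho>"
  proof -
    have "P1 = (\<Prod>i=0..n. ffr (\<alpha> i) (\<beta> i)) / real k ^ m"
      unfolding P1_def prod_dividef kpow ..
    moreover have "real k ^ m \<noteq> 0" using kp by simp
    ultimately show ?thesis unfolding mc_def \<rho>_def m_def[symmetric] by (simp add: field_simps)
  qed
  have "\<bar>P1 / \<rho> - P0\<bar> = \<bar>P1 - \<rho> * P0\<bar> / \<rho>" using rho by (simp add: field_simps abs_divide)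
  also have "\<dots> \<le> (\<bar>P1 - P0\<bar> + \<bar>P0\<bar> * \<bar>\<rho> - 1\<bar>) / \<rho>"
  proof (rule divide_right_mono)
    have "P1 - \<rho> * P0 = (P1 - P0) - P0 * (\<rho> - 1)" by (simp add: algebra_simps)
    thus "\<bar>P1 - \<rho> * P0\<bar> \<le> \<bar>P1 - P0\<bar> + \<bar>P0\<bar> * \<bar>\<rho> - 1\<bar>" by (metis abs_mult abs_triangle_ineq4)
  qed (use rho in simp)
  also have "\<dots> \<le> (real l * real l / real k + 1 * (real l * real l / real k)) / (1/2)"
  proof (rule frac_le)
    show "0 \<le> real l * real l / real k + 1 * (real l * real l / real k)" using kp by simp
    show "\<bar>P1 - P0\<bar> + \<bar>P0\<bar> * \<bar>\<rho> - 1\<bar> \<le> real l * real l / real k + 1 * (real l * real l / real k)"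
      using d1 d2 mm P0b by (intro add_mono mult_mono) auto
  qed (use rho in auto)
  also have "\<dots> = 4 * real l * real l / real k" by simp
  finally show ?thesis unfolding mc_eq P0_def .
qed



lemma poly_cont: "continuous_on UNIV (\<lambda>x::nat\<Rightarrow>real. (\<Sum>\<beta>\<in>M. c \<beta> * (\<Prod>i=1..n. x i ^ \<beta> i)))"
  by (intro continuous_intros continuous_on_product_coordinates)

definition Kset :: "nat \<Rightarrow> (nat \<Rightarrow> real) set" where
  "Kset n = Pi UNIV (\<lambda>i. if i \<in> {1..n} then {0..1} else {0}) \<inter> {x. (\<Sum>i=1..n. x i) \<le> 1}"

lemma compact_Kset: "compact (Kset n)"
proof -
  have "compactin (product_topology (\<lambda>i. euclidean) UNIV) (PiE UNIV (\<lambda>i::nat. if i \<in> {1..n} then {0..1::real} else {0}))"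
    by (subst compactin_PiE) auto
  hence "compact (Pi UNIV (\<lambda>i::nat. if i \<in> {1..n} then {0..1::real} else {0}))"
    by (simp add: euclidean_product_topology PiE_UNIV_domain)
  moreover have "closed {x::nat\<Rightarrow>real. (\<Sum>i=1..n. x i) \<le> 1}"
    by (intro closed_Collect_le continuous_intros continuous_on_product_coordinates)
  ultimately show ?thesis unfolding Kset_def by (rule compact_Int_closed)
qed

lemma Kset_simplex: "Kset n \<subseteq> std_simplex n"
proof
  fix x assume "x \<in> Kset n"
  hence x1: "x \<in> Pi UNIV (\<lambda>i. if i \<in> {1..n} then {0..1} else {0})" and x2: "(\<Sum>i=1..n. x i) \<le> 1"
    unfolding Kset_def by auto
  have "x i \<in> {0..1}" if "i \<in> {1..n}" for i using Pi_mem[OF x1, of i] that by simp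
  thus "x \<in> std_simplex n" using x2 unfolding std_simplex_def by auto
qed

lemma pos_lower:
  assumes "\<forall>x. p x = (\<Sum>\<beta>\<in>M. c \<beta> * (\<Prod>i=1..n. x i ^ \<beta> i))"
    and "\<forall>x\<in>std_simplex n. p x > 0"
  shows "\<exists>\<delta>>0. \<forall>x\<in>Kset n. p x \<ge> \<delta>"
proof -
  have pe: "p = (\<lambda>x. \<Sum>\<beta>\<in>M. c \<beta> * (\<Prod>i=1..n. x i ^ \<beta> i))" using assms(1) by auto
  have "(\<lambda>_. 0) \<in> Kset n" unfolding Kset_def by auto
  hence "Kset n \<noteq> {}" by blast
  moreover have "continuous_on (Kset n) p"
    unfolding pe by (rule continuous_on_subset[OF poly_cont]) simp
  ultimately obtain x0 where "x0 \<in> Kset n" "\<forall>y\<in>Kset n. p x0 \<le> p y"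
    using continuous_attains_inf[OF compact_Kset] by blast
  moreover have "p x0 > 0" using assms(2) Kset_simplex \<open>x0 \<in> Kset n\<close> by blast
  ultimately show ?thesis by blast
qed



lemma bern_nonneg:
  assumes "x \<in> std_simplex n"
  shows "bernstein n k \<alpha> x \<ge> 0"
proof -
  have "bary n x i \<ge> 0" if "i \<in> {0..n}" for i
    using assms that unfolding std_simplex_def bary_def by auto
  thus ?thesis unfolding bernstein_def by (intro mult_nonneg_nonneg divide_nonneg_nonneg prod_nonneg) auto
qed

lemma bern_sum1: "(\<Sum>\<alpha>\<in>multi_idx n k. bernstein n k \<alpha> x) = 1"
proof -
  have z: "(\<lambda>_. 0) \<in> monomial_exps n 0" by (simp add: monomial_exps_def)
  have "rep n k (mc n (\<lambda>_. 0) k) (\<lambda>x. \<Prod>i=1..n. x i ^ (\<lambda>_. 0::nat) i)"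
    by (rule mono_rep[OF z]) simp
  moreover have "mc n (\<lambda>_. 0) k \<alpha> = 1" for \<alpha> by (simp add: mc_def ffr_0)
  ultimately show ?thesis unfolding rep_def by simp
qed

theorem corollary5p4:
  fixes n l :: nat and p q :: "(nat \<Rightarrow> real) \<Rightarrow> real"
  assumes "poly_deg_le n l p" and "poly_deg_le n l q"
    and "\<forall>x\<in>std_simplex n. p x / q x > 0"
    and "\<forall>j\<ge>l. \<forall>\<alpha>\<in>multi_idx n j. bernstein_coeffs n j q \<alpha> > 0"
  shows "\<exists>k\<ge>l. Min (rat_bernstein_coeffs n k p q ` multi_idx n k) > 0"
proof -
  obtain cp where cp: "\<forall>x. p x = (\<Sum>\<beta>\<in>monomial_exps n l. cp \<beta> * (\<Prod>i=1..n. x i ^ \<beta> i))"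
    using assms(1) unfolding poly_deg_le_def by blast
  obtain cq where cq: "\<forall>x. q x = (\<Sum>\<beta>\<in>monomial_exps n l. cq \<beta> * (\<Prod>i=1..n. x i ^ \<beta> i))"
    using assms(2) unfolding poly_deg_le_def by blast
  define Bp where "Bp k \<alpha> = (\<Sum>\<beta>\<in>monomial_exps n l. cp \<beta> * mc n \<beta> k \<alpha>)" for k \<alpha>
  define Bq where "Bq k \<alpha> = (\<Sum>\<beta>\<in>monomial_exps n l. cq \<beta> * mc n \<beta> k \<alpha>)" for k \<alpha>
  have rp: "rep n k (Bp k) p" if "l \<le> k" for k unfolding Bp_def by (rule poly_rep[OF cp that])
  have rq: "rep n k (Bq k) q" if "l \<le> k" for k unfolding Bq_def by (rule poly_rep[OF cq that])
  have qpos: "q x > 0" if x: "x \<in> std_simplex n" for x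
  proof -
    have "(\<Sum>\<alpha>\<in>multi_idx n l. bernstein n l \<alpha> x) = 1" by (rule bern_sum1)
    then obtain \<alpha> where a: "\<alpha> \<in> multi_idx n l" "bernstein n l \<alpha> x \<noteq> 0"
      by (metis (no_types, lifting) sum.neutral zero_neq_one)
    have bq: "Bq l \<beta> > 0" if "\<beta> \<in> multi_idx n l" for \<beta>
    proof -
      have "0 < bernstein_coeffs n l q \<beta>" using assms(4) that by blast
      thus ?thesis using bc_eq[OF rq[OF order_refl] that] by simp
    qed
    have "q x = (\<Sum>\<beta>\<in>multi_idx n l. Bq l \<beta> * bernstein n l \<beta> x)" using rq[OF order_refl] unfolding rep_def by simp
    also have "\<dots> > 0"
    proof (rule sum_pos2[OF finite_multi_idx a(1)])
      show "0 < Bq l \<alpha> * bernstein n l \<alpha> x" using bq[OF a(1)] a(2) bern_nonneg[OF x, of l \<alpha>] by simp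
      show "\<And>\<beta>. \<beta> \<in> multi_idx n l \<Longrightarrow> 0 \<le> Bq l \<beta> * bernstein n l \<beta> x"
        using bq bern_nonneg[OF x] by (simp add: less_imp_le)
    qed
    finally show ?thesis .
  qed
  have ppos: "\<forall>x\<in>std_simplex n. p x > 0"
  proof
    fix x assume x: "x \<in> std_simplex n"
    have "p x / q x > 0" using assms(3) x by blast
    thus "p x > 0" using qpos[OF x] by (simp add: zero_less_divide_iff)
  qed
  obtain \<delta> where dpos: "\<delta> > 0" and dlow: "\<forall>x\<in>Kset n. p x \<ge> \<delta>"
    using pos_lower[OF cp ppos] by blast
  define C where "C = (\<Sum>\<beta>\<in>monomial_exps n l. \<bar>cp \<beta>\<bar>) * (4 * real l * real l)"
  have C0: "C \<ge> 0" unfolding C_def by (intro mult_nonneg_nonneg sum_nonneg) auto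
  define k where "k = max (2*l*l + l + 1) (nat \<lceil>C / \<delta>\<rceil> + 1)"
  have kl: "l \<le> k" "0 < k" "2*l*l \<le> k" unfolding k_def by auto
  have kp: "real k > 0" using kl by simp
  have Ck: "C / real k < \<delta>"
  proof -
    have "C / \<delta> \<le> real (nat \<lceil>C / \<delta>\<rceil>)" by linarith
    also have "\<dots> < real k" unfolding k_def by simp
    finally have "C < \<delta> * real k" using dpos by (simp add: divide_less_eq mult.commute)
    thus ?thesis using kp by (simp add: divide_less_eq mult.commute)
  qed
  have pos: "rat_bernstein_coeffs n k p q \<alpha> > 0" if a: "\<alpha> \<in> multi_idx n k" for \<alpha>
  proof -
    have ak: "\<alpha> i \<le> k" if "i \<in> {0..n}" for i
      using member_le_sum[of i "{0..n}" \<alpha>] that a by (auto simp: multi_idx_def)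
    define x where "x i = (if i \<in> {1..n} then real (\<alpha> i) / real k else 0)" for i
    have xK: "x \<in> Kset n"
    proof -
      have "x \<in> Pi UNIV (\<lambda>i. if i \<in> {1..n} then {0..1} else {0})"
        using ak kp by (auto simp: x_def divide_le_eq_1)
      moreover have "(\<Sum>i=1..n. x i) \<le> 1"
      proof -
        have "(\<Sum>i=1..n. x i) = (\<Sum>i=1..n. real (\<alpha> i)) / real k"
          unfolding sum_divide_distrib x_def by (intro sum.cong) auto
        also have "(\<Sum>i=1..n. real (\<alpha> i)) \<le> (\<Sum>i=0..n. real (\<alpha> i))"
          by (intro sum_mono2) auto
        also have "(\<Sum>i=0..n. real (\<alpha> i)) = real k" using a by (simp add: multi_idx_def flip: of_nat_sum)
        finally show ?thesis using kp by (simp add: divide_right_mono)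
      qed
      ultimately show ?thesis unfolding Kset_def by auto
    qed
    have px: "p x = (\<Sum>\<beta>\<in>monomial_exps n l. cp \<beta> * (\<Prod>i=0..n. (real (\<alpha> i) / real k) ^ \<beta> i))"
      unfolding cp[rule_format]
    proof (intro sum.cong refl arg_cong[where f="\<lambda>t. cp _ * t"])
      fix \<beta> assume b: "\<beta> \<in> monomial_exps n l"
      have "{0..n} = insert 0 {1..n}" by auto
      hence "(\<Prod>i=0..n. (real (\<alpha> i) / real k) ^ \<beta> i) = (real (\<alpha> 0) / real k) ^ \<beta> 0 * (\<Prod>i=1..n. (real (\<alpha> i) / real k) ^ \<beta> i)"
        by simp
      also have "\<beta> 0 = 0" using b by (auto simp: monomial_exps_def)
      finally show "(\<Prod>i=1..n. x i ^ \<beta> i) = (\<Prod>i=0..n. (real (\<alpha> i) / real k) ^ \<beta> i)"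
        by (simp add: x_def)
    qed
    have "\<bar>Bp k \<alpha> - p x\<bar> = \<bar>\<Sum>\<beta>\<in>monomial_exps n l. cp \<beta> * (mc n \<beta> k \<alpha> - (\<Prod>i=0..n. (real (\<alpha> i) / real k) ^ \<beta> i))\<bar>"
      unfolding Bp_def px by (simp add: sum_subtractf right_diff_distrib)
    also have "\<dots> \<le> (\<Sum>\<beta>\<in>monomial_exps n l. \<bar>cp \<beta>\<bar> * \<bar>mc n \<beta> k \<alpha> - (\<Prod>i=0..n. (real (\<alpha> i) / real k) ^ \<beta> i)\<bar>)"
      by (rule order_trans[OF sum_abs]) (simp add: abs_mult)
    also have "\<dots> \<le> (\<Sum>\<beta>\<in>monomial_exps n l. \<bar>cp \<beta>\<bar> * (4 * real l * real l / real k))"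
      by (intro sum_mono mult_left_mono mc_approx) (use a kl in auto)
    also have "\<dots> = C / real k" unfolding C_def sum_distrib_right sum_divide_distrib by (simp add: mult.assoc)
    finally have "\<bar>Bp k \<alpha> - p x\<bar> \<le> C / real k" .
    moreover have "p x \<ge> \<delta>" using dlow xK by blast
    ultimately have "Bp k \<alpha> > 0" using Ck by (auto simp: abs_le_iff)
    moreover have "bernstein_coeffs n k p \<alpha> = Bp k \<alpha>" by (rule bc_eq[OF rp[OF kl(1)] a])
    moreover have "bernstein_coeffs n k q \<alpha> > 0" using assms(4) kl(1) a by blast
    ultimately show ?thesis unfolding rat_bernstein_coeffs_def by simp
  qed
  have ne: "multi_idx n k \<noteq> {}"
  proof -
    have "(\<lambda>i. if i = 0 then k else 0) \<in> multi_idx n k"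
      unfolding multi_idx_def by (simp add: sum.delta)
    thus ?thesis by blast
  qed
  have "Min (rat_bernstein_coeffs n k p q ` multi_idx n k) > 0"
    using pos ne finite_multi_idx by simp
  thus ?thesis using kl(1) by blast
qed


end
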